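(* Let $W_2\in\{M_2,S_2\}$, where $M_2$ is the space of $2\times 2$ real matrices and $S_2$ is the subspace of real symmetric $2\times2$ matrices, and let $\phi:W_2\to W_2$ be a linear map. Then $\phi$ preserves the Lorentz spectrum (i.e. $\sigma_{\mathcal{K}}(\phi(A))=\sigma_{\mathcal{K}}(A)$ for all $A\in W_2$) if and only if either $\phi(A)=PAP^{-1}$ for all $A\in W_2$, or $\phi(A)=QAQ^{-1}$ for all $A\in W_2$, where $$P=\begin{bmatrix}\alpha&\beta\\ \beta&\alpha\end{bmatrix},\qquad Q=\begin{bmatrix}-\alpha&-\beta\\ \beta&\alpha\end{bmatrix}$$ for some $\alpha,\beta\in\mathbb{R}$ with $\alpha^2-\beta^2=1$, and with $\beta=0$ if $W_2=S_2$.
   Context: The Lorentz cone in $\mathbb{R}^2$ is $\mathcal{K}=\{(x_1,x_2)^T\in\mathbb{R}^2:\ |x_1|\le x_2\}$. For $A\in M_2$, a real number $\lambda$ is a Lorentz eigenvalue (L-eigenvalue) of $A$ if there is a nonzero $x\in\mathbb{R}^2$ with $x\in\mathcal{K}$, $(A-\lambda I)x\in\mathcal{K}$ and $x^T(A-\lambda I)x=0$; such $x$ is an L-eigenvector. The Lorentz spectrum $\sigma_{\mathcal{K}}(A)$ is the set of all L-eigenvalues of $A$. *)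

theory Defs
  imports "HOL-Analysis.Analysis"
begin

definition lorentz_cone :: "(real^2) set" where
  "lorentz_cone = {x. \<bar>x$1\<bar> \<le> x$2}"

definition L_eigenvalue :: "real^2^2 \<Rightarrow> real \<Rightarrow> bool" where
  "L_eigenvalue A l \<longleftrightarrow>
     (\<exists>x::real^2. x \<noteq> 0 \<and> x \<in> lorentz_cone
        \<and> (A - l *\<^sub>R mat 1) *v x \<in> lorentz_cone
        \<and> x \<bullet> ((A - l *\<^sub>R mat 1) *v x) = 0)"

definition L_spectrum :: "real^2^2 \<Rightarrow> real set" where
  "L_spectrum A = {l. L_eigenvalue A l}"

definition sym_mats :: "(real^2^2) set" where
  "sym_mats = {A. transpose A = A}"

definition mat2 :: "real \<Rightarrow> real \<Rightarrow> real \<Rightarrow> real \<Rightarrow> real^2^2" where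
  "mat2 a b c d = vector [vector [a, b], vector [c, d]]"

end

theory Submission
  imports Defs
begin


definition pe :: "real \<Rightarrow> real \<Rightarrow> real \<Rightarrow> real \<Rightarrow> real \<Rightarrow> bool" where
  "pe p r s q l \<longleftrightarrow> (0 \<le> s \<and> l = p) \<or> (0 \<le> r \<and> l = q) \<or>
     (\<exists>t>0. (p - l) * t + r = 0 \<and> s * t + (q - l) = 0)"

lemma peI3: "t > 0 \<Longrightarrow> (p - l) * t + r = 0 \<Longrightarrow> s * t + (q - l) = 0 \<Longrightarrow> pe p r s q l"
  unfolding pe_def by blast

lemma pe_P3:
  assumes "pe p r s q l" "l \<noteq> p" "l \<noteq> q"
  shows "\<exists>t>0. r = (l - p) * t \<and> s * t = l - q"
proof -
  obtain t where "t > 0" "(p - l) * t + r = 0" "s * t + (q - l) = 0"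
    using assms unfolding pe_def by blast
  then show ?thesis by (intro exI[of _ t]) (auto simp: algebra_simps)
qed

lemma pe_prod:
  assumes "pe p r s q l" "l \<noteq> p" "l \<noteq> q"
  shows "r * s = (l - p) * (l - q)"
proof -
  obtain t where t: "t > 0" "r = (l - p) * t" "s * t = l - q"
    using pe_P3[OF assms] by blast
  have "r * s = (l - p) * (s * t)" by (subst t(2)) (simp add: algebra_simps)
  then show ?thesis using t(3) by simp
qed

lemma pe_swap: "pe q s r p l \<longleftrightarrow> pe p r s q l"
proof -
  have *: "pe q s r p l" if "pe p r s q l" for p r s q
  proof -
    from that consider "0 \<le> s" "l = p" | "0 \<le> r" "l = q" | t where "t > 0" "(p - l) * t + r = 0" "s * t + (q - l) = 0"
      unfolding pe_def by blast
    then show ?thesis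
    proof cases
      case 3
      have "(q - l) * (1/t) + s = 0" using 3 by (simp add: field_simps)
      moreover have "r * (1/t) + (p - l) = 0" using 3 by (simp add: field_simps)
      ultimately show ?thesis using 3 by (intro peI3[of "1/t"]) auto
    qed (auto simp: pe_def)
  qed
  show ?thesis using *[of p r s q] *[of q s r p] by blast
qed

lemma pe_scale:
  assumes "k > 0"
  shows "pe p (k * r) (s / k) q l \<longleftrightarrow> pe p r s q l"
proof -
  have "(\<exists>t>0. (p - l) * t + k * r = 0 \<and> s / k * t + (q - l) = 0) \<longleftrightarrow>
        (\<exists>t>0. (p - l) * t + r = 0 \<and> s * t + (q - l) = 0)"
  proof
    assume "\<exists>t>0. (p - l) * t + k * r = 0 \<and> s / k * t + (q - l) = 0"
    then obtain t where t: "t > 0" "(p - l) * t + k * r = 0" "s / k * t + (q - l) = 0" by blast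
    show "\<exists>t>0. (p - l) * t + r = 0 \<and> s * t + (q - l) = 0"
      apply (rule exI[of _ "t / k"]) using t assms by (auto simp: field_simps)
  next
    assume "\<exists>t>0. (p - l) * t + r = 0 \<and> s * t + (q - l) = 0"
    then obtain t where t: "t > 0" "(p - l) * t + r = 0" "s * t + (q - l) = 0" by blast
    show "\<exists>t>0. (p - l) * t + k * r = 0 \<and> s / k * t + (q - l) = 0"
    proof (intro exI conjI)
      show "t * k > 0" using t assms by simp
      have "(p - l) * (t * k) + k * r = k * ((p - l) * t + r)" by (simp add: algebra_simps)
      then show "(p - l) * (t * k) + k * r = 0" using t by simp
      show "s / k * (t * k) + (q - l) = 0" using t assms by simp
    qed
  qed
  moreover have "0 \<le> k * r \<longleftrightarrow> 0 \<le> r" using assms by (simp add: zero_le_mult_iff)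
  moreover have "0 \<le> s / k \<longleftrightarrow> 0 \<le> s" using assms by (simp add: zero_le_divide_iff)
  ultimately show ?thesis unfolding pe_def by simp
qed

lemma diag_in:
  assumes "\<And>l. pe p r s q l \<Longrightarrow> P l" "\<And>l. pe (-p) (-r) (-s) (-q) l \<Longrightarrow> P (-l)"
  shows "P p \<and> P q"
proof
  show "P p"
  proof (cases "0 \<le> s")
    case True then show ?thesis using assms(1)[of p] by (simp add: pe_def)
  next
    case False then show ?thesis using assms(2)[of "-p"] by (simp add: pe_def)
  qed
  show "P q"
  proof (cases "0 \<le> r")
    case True then show ?thesis using assms(1)[of q] by (simp add: pe_def)
  next
    case False then show ?thesis using assms(2)[of "-q"] by (simp add: pe_def)
  qed
qed

lemma perron:
  assumes "r > 0" "s > 0"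
  shows "pe c r s c (c + s * sqrt (r / s))"
proof (rule peI3[of "sqrt (r / s)"])
  show "sqrt (r / s) > 0" using assms by simp
  have "sqrt (r / s) * sqrt (r / s) = r / s" using assms by simp
  then show "(c - (c + s * sqrt (r / s))) * sqrt (r / s) + r = 0" using assms
    by (simp add: algebra_simps)
  show "s * sqrt (r / s) + (c - (c + s * sqrt (r / s))) = 0" by simp
qed

lemma lemT:
  assumes "\<And>l. pe p r s q l \<Longrightarrow> l = c" "\<And>l. pe (-p) (-r) (-s) (-q) l \<Longrightarrow> l = -c"
  shows "p = c \<and> q = c \<and> r * s \<le> 0"
proof -
  have pq: "p = c \<and> q = c" using diag_in[of p r s q "\<lambda>l. l = c"] assms by force
  have "\<not> (r > 0 \<and> s > 0)"
  proof
    assume "r > 0 \<and> s > 0"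
    then have "pe c r s c (c + s * sqrt (r / s))" "s * sqrt (r / s) > 0" using perron by auto
    then show False using assms(1) pq by fastforce
  qed
  moreover have "\<not> (r < 0 \<and> s < 0)"
  proof
    assume rs: "r < 0 \<and> s < 0"
    then have "r / s > 0" by (simp add: divide_neg_neg)
    then have "sqrt (r / s) > 0" by simp
    then have "pe (-c) (-r) (-s) (-c) (-c + (-s) * sqrt (r / s))" "(-s) * sqrt (r / s) > 0"
      using perron[of "-r" "-s" "-c"] rs by (auto simp: mult_neg_pos)
    then show False using assms(2) pq by fastforce
  qed
  ultimately show ?thesis using pq by (auto simp: mult_le_0_iff not_less)
qed

lemma step12:
  assumes H: "\<And>p r s q l. pe p r s q l \<longleftrightarrow> pe (p*a1 + r*a2 + s*a3 + q*a4) (p*b1 + r*b2 + s*b3 + q*b4)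
                  (p*c1 + r*c2 + s*c3 + q*c4) (p*d1 + r*d2 + s*d3 + q*d4) l"
  shows "a2 = 0 \<and> d2 = 0 \<and> a3 = 0 \<and> d3 = 0 \<and> b2*c2 = 0 \<and> b3*c3 = 0 \<and> b2*c3 + b3*c2 = 1 \<and> b2 + b3 > 0 \<and> c2 + c3 > 0"
proof -
  have s1: "pe 0 1 0 0 l \<longleftrightarrow> l = 0" for l by (auto simp: pe_def)
  have s2: "pe 0 (-1) 0 0 l \<longleftrightarrow> l = 0" for l by (auto simp: pe_def)
  have s3: "pe 0 0 1 0 l \<longleftrightarrow> l = 0" for l by (auto simp: pe_def)
  have s4: "pe 0 0 (-1) 0 l \<longleftrightarrow> l = 0" for l by (auto simp: pe_def)
  have A2: "a2 = 0 \<and> d2 = 0 \<and> b2*c2 \<le> 0"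
    apply (rule lemT) using H[of 0 1 0 0] H[of 0 "-1" 0 0] s1 s2 by auto
  have A3: "a3 = 0 \<and> d3 = 0 \<and> b3*c3 \<le> 0"
    apply (rule lemT) using H[of 0 0 1 0] H[of 0 0 "-1" 0] s3 s4 by auto
  have t11: "pe 0 1 1 0 1" by (rule peI3[of 1]) auto
  have t14: "pe 0 1 4 0 2" by (rule peI3[of "1/2"]) auto
  have t41: "pe 0 4 1 0 2" by (rule peI3[of 2]) auto
  have "pe 0 (b2 + b3) (c2 + c3) 0 1" using H[of 0 1 1 0 1] t11 A2 A3 by simp
  then obtain t where t: "t > 0" "b2 + b3 = (1 - 0) * t" "(c2 + c3) * t = 1 - 0" using pe_P3 by fastforce
  have pos1: "b2 + b3 > 0" using t by simp
  have "(c2 + c3) * t > 0" using t by simp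
  then have pos2: "c2 + c3 > 0" using t(1) by (simp add: zero_less_mult_iff)
  note pos = pos1 pos2
  have e1: "(b2 + b3) * (c2 + c3) = 1" using t by (simp add: algebra_simps)
  have "pe 0 (b2 + 4*b3) (c2 + 4*c3) 0 2" using H[of 0 1 4 0 2] t14 A2 A3 by (simp add: mult.commute)
  then have e2: "(b2 + 4*b3) * (c2 + 4*c3) = 4" using pe_prod by fastforce
  have "pe 0 (4*b2 + b3) (4*c2 + c3) 0 2" using H[of 0 4 1 0 2] t41 A2 A3 by (simp add: mult.commute)
  then have e3: "(4*b2 + b3) * (4*c2 + c3) = 4" using pe_prod by fastforce
  have f1: "b2*c2 + b2*c3 + b3*c2 + b3*c3 = 1" using e1 by (simp add: algebra_simps)
  have f2: "b2*c2 + 4*(b2*c3) + 4*(b3*c2) + 16*(b3*c3) = 4" using e2 by (simp add: algebra_simps)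
  have f3: "16*(b2*c2) + 4*(b2*c3) + 4*(b3*c2) + b3*c3 = 4" using e3 by (simp add: algebra_simps)
  have "b2*c2 = 0" "b3*c3 = 0" "b2*c3 + b3*c2 = 1" using f1 f2 f3 by linarith+
  then show ?thesis using A2 A3 pos by blast
qed

lemma core_diag:
  assumes H: "\<And>p r s q l. pe p r s q l \<longleftrightarrow> pe (p*a1 + r*a2 + s*a3 + q*a4) (p*b1 + r*b2 + s*b3 + q*b4)
                  (p*c1 + r*c2 + s*c3 + q*c4) (p*d1 + r*d2 + s*d3 + q*d4) l"
    and c2: "c2 = 0"
  shows "a1 = 1 \<and> b1 = 0 \<and> c1 = 0 \<and> d1 = 0 \<and> a2 = 0 \<and> b2 > 0 \<and> d2 = 0 \<and>
         a3 = 0 \<and> b3 = 0 \<and> b2 * c3 = 1 \<and> d3 = 0 \<and> a4 = 0 \<and> b4 = 0 \<and> c4 = 0 \<and> d4 = 1"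
proof -
  note S = step12[OF H]
  have a2: "a2 = 0" and d2: "d2 = 0" and a3: "a3 = 0" and d3: "d3 = 0" using S by auto
  have bc: "b2 * c3 = 1" using S c2 by simp
  then have c3nz: "c3 \<noteq> 0" by auto
  have b3: "b3 = 0" using S c3nz by simp
  have b2: "b2 > 0" using S b3 by simp
  \<comment> \<open>the image of the identity\<close>
  have sI1: "pe 1 0 0 1 l \<longleftrightarrow> l = 1" for l by (auto simp: pe_def)
  have sI2: "pe (-1) 0 0 (-1) l \<longleftrightarrow> l = -1" for l by (auto simp: pe_def)
  have C: "a1 + a4 = 1 \<and> d1 + d4 = 1 \<and> (b1 + b4) * (c1 + c4) \<le> 0"
  proof (rule lemT)
    fix l
    show "pe (a1 + a4) (b1 + b4) (c1 + c4) (d1 + d4) l \<Longrightarrow> l = 1"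
      using H[of 1 0 0 1 l] sI1 by simp
    show "pe (-(a1 + a4)) (-(b1 + b4)) (-(c1 + c4)) (-(d1 + d4)) l \<Longrightarrow> l = -1"
      using H[of "-1" 0 0 "-1" l] sI2 by (simp add: algebra_simps)
  qed
  define R where "R = b1 + b4"
  define T where "T = c1 + c4"
  have RT: "R * T \<le> 0" using C by (simp add: R_def T_def)
  have e1: "(1 - R) * (1 - T) = 1"
  proof -
    define x where "x = (1 - R) / b2"
    define y where "y = (1 - T) * b2"
    have i1: "1*a1 + x*a2 + y*a3 + 1*a4 = 1" using C a2 a3 by simp
    have i2: "1*b1 + x*b2 + y*b3 + 1*b4 = 1" using b2 b3 by (simp add: x_def R_def)
    have yc: "y * c3 = 1 - T" using bc by (simp add: y_def mult.assoc)
    have i3: "1*c1 + x*c2 + y*c3 + 1*c4 = 1" using c2 yc by (simp add: T_def)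
    have i4: "1*d1 + x*d2 + y*d3 + 1*d4 = 1" using C d2 d3 by simp
    have "pe 1 1 1 1 2" by (rule peI3[of 1]) auto
    then have "pe 1 x y 1 2" using H[of 1 x y 1 2, unfolded i1 i2 i3 i4] by simp
    then have "x * y = (2 - 1) * (2 - 1)" by (rule pe_prod) auto
    then show ?thesis using b2 by (simp add: x_def y_def)
  qed
  have e2: "(2 - R) * (2 - T) = 4"
  proof -
    define x where "x = (2 - R) / b2"
    define y where "y = (2 - T) * b2"
    have i1: "1*a1 + x*a2 + y*a3 + 1*a4 = 1" using C a2 a3 by simp
    have i2: "1*b1 + x*b2 + y*b3 + 1*b4 = 2" using b2 b3 by (simp add: x_def R_def)
    have yc: "y * c3 = 2 - T" using bc by (simp add: y_def mult.assoc)
    have i3: "1*c1 + x*c2 + y*c3 + 1*c4 = 2" using c2 yc by (simp add: T_def)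
    have i4: "1*d1 + x*d2 + y*d3 + 1*d4 = 1" using C d2 d3 by simp
    have "pe 1 2 2 1 3" by (rule peI3[of 1]) auto
    then have "pe 1 x y 1 3" using H[of 1 x y 1 3, unfolded i1 i2 i3 i4] by simp
    then have "x * y = (3 - 1) * (3 - 1)" by (rule pe_prod) auto
    then show ?thesis using b2 by (simp add: x_def y_def)
  qed
  have "R * T = R + T" using e1 by (simp add: algebra_simps)
  moreover have "R * T = 2 * (R + T)" using e2 by (simp add: algebra_simps)
  ultimately have RT1: "R + T = 0" by simp
  with \<open>R * T = R + T\<close> have "R * T = 0" by simp
  with RT1 have R0: "R = 0" and T0: "T = 0" by auto
  have sE1: "pe 1 0 0 0 l \<longleftrightarrow> l = 0 \<or> l = 1" for l by (auto simp: pe_def)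
  have sE2: "pe (-1) 0 0 0 l \<longleftrightarrow> l = 0 \<or> l = -1" for l by (auto simp: pe_def)
  have ad: "(a1 = 0 \<or> a1 = 1) \<and> (d1 = 0 \<or> d1 = 1)"
  proof (rule diag_in[of a1 b1 c1 d1 "\<lambda>l. l = 0 \<or> l = 1"])
    fix l
    show "pe a1 b1 c1 d1 l \<Longrightarrow> l = 0 \<or> l = 1" using H[of 1 0 0 0 l] sE1 by simp
    show "pe (-a1) (-b1) (-c1) (-d1) l \<Longrightarrow> -l = 0 \<or> -l = 1" using H[of "-1" 0 0 0 l] sE2 by auto
  qed
  have test: "(b1 + x0 * b2) * (c1 + y0 * c3) = (l - a1) * (l - d1)"
    if "pe 1 x0 y0 0 l" "l \<noteq> 0" "l \<noteq> 1" for x0 y0 l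
  proof (rule pe_prod)
    show "pe a1 (b1 + x0 * b2) (c1 + y0 * c3) d1 l"
      using H[of 1 x0 y0 0 l] that(1) a2 a3 b3 c2 d2 d3 by simp
    show "l \<noteq> a1" "l \<noteq> d1" using ad that by auto
  qed
  have "pe 1 1 2 0 2" by (rule peI3[of 1]) auto
  from test[OF this] have u1: "(b1 + b2) * (c1 + 2 * c3) = (2 - a1) * (2 - d1)" by simp
  have "pe 1 2 1 0 2" by (rule peI3[of 2]) auto
  from test[OF this] have u2: "(b1 + 2 * b2) * (c1 + c3) = (2 - a1) * (2 - d1)" by simp
  have "pe 1 2 3 0 3" by (rule peI3[of 1]) auto
  from test[OF this] have u3: "(b1 + 2 * b2) * (c1 + 3 * c3) = (3 - a1) * (3 - d1)" by simp
  have "pe 1 1 6 0 3" by (rule peI3[of "1/2"]) auto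
  from test[OF this] have u4: "(b1 + b2) * (c1 + 6 * c3) = (3 - a1) * (3 - d1)" by simp
  have v1: "b1*c1 + 2*(b1*c3) + b2*c1 + 2 = (2 - a1) * (2 - d1)" using u1 bc by (simp add: algebra_simps)
  have v2: "b1*c1 + b1*c3 + 2*(b2*c1) + 2 = (2 - a1) * (2 - d1)" using u2 bc by (simp add: algebra_simps)
  have v3: "b1*c1 + 3*(b1*c3) + 2*(b2*c1) + 6 = (3 - a1) * (3 - d1)" using u3 bc by (simp add: algebra_simps)
  have v4: "b1*c1 + 6*(b1*c3) + b2*c1 + 6 = (3 - a1) * (3 - d1)" using u4 bc by (simp add: algebra_simps)
  define z where "z = b1*c1"
  define m where "m = b1*c3"
  define n where "n = b2*c1"
  have w: "z + 2*m + n + 2 = (2 - a1) * (2 - d1)" "z + m + 2*n + 2 = (2 - a1) * (2 - d1)"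
    "z + 3*m + 2*n + 6 = (3 - a1) * (3 - d1)" "z + 6*m + n + 6 = (3 - a1) * (3 - d1)"
    using v1 v2 v3 v4 unfolding z_def m_def n_def by simp_all
  have ad2: "(a1 = 1 \<and> d1 = 0) \<or> (a1 = 0 \<and> d1 = 1)" and mn: "m = 0" "n = 0"
  proof -
    from ad consider "a1 = 0" "d1 = 0" | "a1 = 0" "d1 = 1" | "a1 = 1" "d1 = 0" | "a1 = 1" "d1 = 1" by blast
    then have "((a1 = 1 \<and> d1 = 0) \<or> (a1 = 0 \<and> d1 = 1)) \<and> m = 0 \<and> n = 0"
    proof cases
      case 1 then show ?thesis using w by (simp; linarith)
    next
      case 2 then show ?thesis using w by (simp; linarith)
    next
      case 3 then show ?thesis using w by (simp; linarith)
    next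
      case 4 then show ?thesis using w by (simp; linarith)
    qed
    then show "(a1 = 1 \<and> d1 = 0) \<or> (a1 = 0 \<and> d1 = 1)" "m = 0" "n = 0" by auto
  qed
  have z: "b1*c3 = 0" "b2*c1 = 0" using mn unfolding m_def n_def by auto
  have b1: "b1 = 0" using z c3nz by simp
  have c1: "c1 = 0" using z b2 by simp
  have a1: "a1 = 1 \<and> d1 = 0"
  proof (rule ccontr)
    assume "\<not> (a1 = 1 \<and> d1 = 0)"
    then have a: "a1 = 0" "d1 = 1" using ad2 by auto
    have "pe a1 (b1 + b2) (c1 - c3) d1 1" using a b2 b1 unfolding pe_def by simp
    then have "pe 1 1 (-1) 0 1" using H[of 1 1 "-1" 0 1] a2 a3 b3 c2 d2 d3 by simp
    then show False by (auto simp: pe_def)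
  qed
  show ?thesis using a1 b1 c1 a2 a3 b2 b3 d2 d3 bc C R0 T0 unfolding R_def T_def by simp
qed

lemma core_M:
  assumes H: "\<And>p r s q l. pe p r s q l \<longleftrightarrow> pe (p*a1 + r*a2 + s*a3 + q*a4) (p*b1 + r*b2 + s*b3 + q*b4)
                  (p*c1 + r*c2 + s*c3 + q*c4) (p*d1 + r*d2 + s*d3 + q*d4) l"
  shows "(a1 = 1 \<and> b1 = 0 \<and> c1 = 0 \<and> d1 = 0 \<and> a2 = 0 \<and> b2 > 0 \<and> c2 = 0 \<and> d2 = 0 \<and>
         a3 = 0 \<and> b3 = 0 \<and> b2 * c3 = 1 \<and> d3 = 0 \<and> a4 = 0 \<and> b4 = 0 \<and> c4 = 0 \<and> d4 = 1) \<or>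
         (a1 = 0 \<and> b1 = 0 \<and> c1 = 0 \<and> d1 = 1 \<and> a2 = 0 \<and> b2 = 0 \<and> c2 > 0 \<and> d2 = 0 \<and>
         a3 = 0 \<and> b3 * c2 = 1 \<and> c3 = 0 \<and> d3 = 0 \<and> a4 = 1 \<and> b4 = 0 \<and> c4 = 0 \<and> d4 = 0)"
proof -
  note S = step12[OF H]
  have "c2 = 0 \<or> c3 = 0"
  proof (cases "c2 = 0")
    case False
    then have "b2 = 0" using S by simp
    then have "b3 * c2 = 1" using S by simp
    then have "b3 \<noteq> 0" by auto
    then show ?thesis using S by simp
  qed simp
  then show ?thesis
  proof
    assume "c2 = 0"
    from core_diag[OF H this] show ?thesis using \<open>c2 = 0\<close> by simp
  next
    assume c3: "c3 = 0"
    have H': "pe p r s q l \<longleftrightarrow> pe (p*a4 + r*a3 + s*a2 + q*a1) (p*b4 + r*b3 + s*b2 + q*b1)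
                  (p*c4 + r*c3 + s*c2 + q*c1) (p*d4 + r*d3 + s*d2 + q*d1) l" for p r s q l
      using H[of q s r p l] pe_swap[of q s r p l] by (simp add: algebra_simps)
    from core_diag[of a4 a3 a2 a1 b4 b3 b2 b1 c4 c3 c2 c1 d4 d3 d2 d1, OF H' c3]
    have "a4 = 1 \<and> b4 = 0 \<and> c4 = 0 \<and> d4 = 0 \<and> a3 = 0 \<and> b3 > 0 \<and> d3 = 0 \<and>
         a2 = 0 \<and> b2 = 0 \<and> b3 * c2 = 1 \<and> d2 = 0 \<and> a1 = 0 \<and> b1 = 0 \<and> c1 = 0 \<and> d1 = 1" .
    moreover have "c2 > 0"
    proof -
      have "0 < b3 * c2" "0 < b3" using calculation by simp_all
      then show ?thesis by (simp add: zero_less_mult_iff)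
    qed
    ultimately show ?thesis using c3 by simp
  qed
qed

lemma sqr_cases: "(b::real) * b = 1 \<Longrightarrow> b > 0 \<Longrightarrow> b = 1"
  by (metis abs_of_pos mult_cancel_right1 real_sqrt_abs2 real_sqrt_one)

lemma core_S:
  assumes H: "\<And>p h q l. pe p h h q l \<longleftrightarrow> pe (p*a1 + h*a2 + q*a4) (p*b1 + h*b2 + q*b4)
                  (p*b1 + h*b2 + q*b4) (p*d1 + h*d2 + q*d4) l"
  shows "a2 = 0 \<and> b2 = 1 \<and> d2 = 0 \<and> b1 = 0 \<and> b4 = 0 \<and>
         ((a1 = 1 \<and> d1 = 0 \<and> a4 = 0 \<and> d4 = 1) \<or> (a1 = 0 \<and> d1 = 1 \<and> a4 = 1 \<and> d4 = 0))"
proof -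
  have sS1: "pe 0 1 1 0 l \<longleftrightarrow> l = 0 \<or> l = 1" for l
  proof
    assume "pe 0 1 1 0 l"
    then consider "l = 0" | t where "t > 0" "(0 - l) * t + 1 = 0" "1 * t + (0 - l) = 0"
      unfolding pe_def by auto
    then show "l = 0 \<or> l = 1"
    proof cases
      case 2
      then have "l * l = 1" "l > 0" by (auto simp: algebra_simps)
      then show ?thesis using sqr_cases by blast
    qed simp
  next
    assume "l = 0 \<or> l = 1"
    then show "pe 0 1 1 0 l" by (auto simp: pe_def intro: exI[of _ 1])
  qed
  have sS2: "pe 0 (-1) (-1) 0 l \<longleftrightarrow> l = -1" for l
  proof
    assume "pe 0 (-1) (-1) 0 l"
    then obtain t where t: "t > 0" "(0 - l) * t + -1 = 0" "-1 * t + (0 - l) = 0"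
      unfolding pe_def by auto
    from t(3) have lt: "l = -t" by simp
    with t(2) have "t * t = 1" by simp
    with t(1) lt have "t * t = 1" "t > 0" "l = -t" by auto
    then show "l = -1" using sqr_cases by blast
  next
    assume "l = -1"
    then show "pe 0 (-1) (-1) 0 l" by (auto simp: pe_def intro: exI[of _ 1])
  qed
  have g: "pe a2 b2 b2 d2 l \<longleftrightarrow> l = 0 \<or> l = 1" for l using H[of 0 1 0 l] sS1 by simp
  have ng: "pe (-a2) (-b2) (-b2) (-d2) l \<longleftrightarrow> l = -1" for l using H[of 0 "-1" 0 l] sS2 by simp
  have b2pos: "b2 > 0"
  proof (rule ccontr)
    assume "\<not> b2 > 0"
    then have b2: "b2 \<le> 0" by simp
    have "pe (-a2) (-b2) (-b2) (-d2) (-a2)" "pe (-a2) (-b2) (-b2) (-d2) (-d2)" using b2 by (auto simp: pe_def)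
    then have a2: "a2 = 1" and d2: "d2 = 1" using ng by auto
    have "pe a2 b2 b2 d2 (1 + b2)" using a2 d2 by (intro peI3[of 1]) auto
    then have "b2 = 0 \<or> b2 = -1" using g by auto
    then show False
    proof
      assume "b2 = 0"
      then have "pe 1 0 0 1 0" using g[of 0] a2 d2 by simp
      then show False by (auto simp: pe_def)
    next
      assume "b2 = -1"
      then have "pe 1 (-1) (-1) 1 1" using g[of 1] a2 d2 by simp
      then show False by (auto simp: pe_def)
    qed
  qed
  have "pe a2 b2 b2 d2 a2" "pe a2 b2 b2 d2 d2" using b2pos by (auto simp: pe_def)
  then have ad2: "a2 = 0 \<or> a2 = 1" "d2 = 0 \<or> d2 = 1" using g by auto
  have "pe (-a2) (-b2) (-b2) (-d2) (-1)" using ng by simp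
  then obtain t where t: "t > 0" "(-a2 + 1) * t - b2 = 0" "-b2 * t + (-d2 + 1) = 0"
    using b2pos unfolding pe_def by auto
  have G: "a2 = 0 \<and> d2 = 0 \<and> b2 = 1"
  proof -
    have "a2 \<noteq> 1" using t b2pos by auto
    moreover have "d2 \<noteq> 1" using t b2pos by auto
    ultimately have "a2 = 0" "d2 = 0" using ad2 by auto
    moreover then have "b2 * b2 = 1" using t by (auto simp: algebra_simps)
    ultimately show ?thesis using sqr_cases b2pos by blast
  qed
  have sI1: "pe 1 0 0 1 l \<longleftrightarrow> l = 1" for l by (auto simp: pe_def)
  have sI2: "pe (-1) 0 0 (-1) l \<longleftrightarrow> l = -1" for l by (auto simp: pe_def)
  have C: "a1 + a4 = 1 \<and> d1 + d4 = 1 \<and> (b1 + b4) * (b1 + b4) \<le> 0"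
  proof (rule lemT)
    fix l
    show "pe (a1 + a4) (b1 + b4) (b1 + b4) (d1 + d4) l \<Longrightarrow> l = 1"
      using H[of 1 0 1 l] sI1 by simp
    show "pe (-(a1 + a4)) (-(b1 + b4)) (-(b1 + b4)) (-(d1 + d4)) l \<Longrightarrow> l = -1"
      using H[of "-1" 0 "-1" l] sI2 by (simp add: algebra_simps)
  qed
  then have "(b1 + b4) * (b1 + b4) = 0" using zero_le_square[of "b1 + b4"] by linarith
  then have b14: "b1 + b4 = 0" by simp
  have sE1: "pe 1 0 0 0 l \<longleftrightarrow> l = 0 \<or> l = 1" for l by (auto simp: pe_def)
  have sE2: "pe (-1) 0 0 0 l \<longleftrightarrow> l = 0 \<or> l = -1" for l by (auto simp: pe_def)
  have ad: "(a1 = 0 \<or> a1 = 1) \<and> (d1 = 0 \<or> d1 = 1)"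
  proof (rule diag_in[of a1 b1 b1 d1 "\<lambda>l. l = 0 \<or> l = 1"])
    fix l
    show "pe a1 b1 b1 d1 l \<Longrightarrow> l = 0 \<or> l = 1" using H[of 1 0 0 l] sE1 by simp
    show "pe (-a1) (-b1) (-b1) (-d1) l \<Longrightarrow> -l = 0 \<or> -l = 1" using H[of "-1" 0 0 l] sE2 by auto
  qed
  have "pe 3 2 2 0 4" by (rule peI3[of 2]) auto
  then have "pe (3*a1) (3*b1 + 2) (3*b1 + 2) (3*d1) 4" using H[of 3 2 0 4] G by simp
  then have u1: "(3*b1 + 2) * (3*b1 + 2) = (4 - 3*a1) * (4 - 3*d1)"
    by (rule pe_prod) (use ad in auto)
  have "pe 8 3 3 0 9" by (rule peI3[of 3]) auto
  then have "pe (8*a1) (8*b1 + 3) (8*b1 + 3) (8*d1) 9" using H[of 8 3 0 9] G by simp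
  then have u2: "(8*b1 + 3) * (8*b1 + 3) = (9 - 8*a1) * (9 - 8*d1)"
    by (rule pe_prod) (use ad in auto)
  define B where "B = b1 * b1"
  have w1: "9*B + 12*b1 + 4 = (4 - 3*a1) * (4 - 3*d1)" using u1 unfolding B_def by (simp add: algebra_simps)
  have w2: "64*B + 48*b1 + 9 = (9 - 8*a1) * (9 - 8*d1)" using u2 unfolding B_def by (simp add: algebra_simps)
  have F: "(a1 = 1 \<and> d1 = 0 \<or> a1 = 0 \<and> d1 = 1) \<and> b1 = 0"
  proof -
    from ad consider "a1 = 0" "d1 = 0" | "a1 = 0" "d1 = 1" | "a1 = 1" "d1 = 0" | "a1 = 1" "d1 = 1" by blast
    then show ?thesis
    proof cases
      case 1
      then have "9*B + 12*b1 = 12" "64*B + 48*b1 = 72" using w1 w2 by simp_all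
      then have bb: "b1 = 5/14" and BB: "B = 6/7" by linarith+
      have "B = 25/196" unfolding B_def bb by simp
      then show ?thesis using BB by simp
    next
      case 2
      then have "9*B + 12*b1 = 0" "64*B + 48*b1 = 0" using w1 w2 by simp_all
      then have "b1 = 0" by linarith
      then show ?thesis using 2 by simp
    next
      case 3
      then have "9*B + 12*b1 = 0" "64*B + 48*b1 = 0" using w1 w2 by simp_all
      then have "b1 = 0" by linarith
      then show ?thesis using 3 by simp
    next
      case 4
      then have "9*B + 12*b1 = -3" "64*B + 48*b1 = -8" using w1 w2 by simp_all
      then have bb: "b1 = -5/14" and BB: "B = 1/7" by linarith+
      have "B = 25/196" unfolding B_def bb by simp
      then show ?thesis using BB by simp
    qed
  qed
  show ?thesis using F G C b14 by auto
qed



definition bp :: "real^2^2 \<Rightarrow> real" where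
  "bp A = (A$1$1 + A$1$2 + A$2$1 + A$2$2)/2"
definition br :: "real^2^2 \<Rightarrow> real" where
  "br A = (A$1$2 - A$1$1 + A$2$2 - A$2$1)/2"
definition bs :: "real^2^2 \<Rightarrow> real" where
  "bs A = (A$2$1 + A$2$2 - A$1$1 - A$1$2)/2"
definition bq :: "real^2^2 \<Rightarrow> real" where
  "bq A = (A$2$2 - A$2$1 - A$1$2 + A$1$1)/2"

lemma mv2: "((A::'a::comm_semiring_1^2^2) *v x)$1 = A$1$1 * x$1 + A$1$2 * x$2" "(A *v x)$2 = A$2$1 * x$1 + A$2$2 * x$2"
  by (simp_all add: matrix_vector_mult_def sum_2)

lemma inner2: "(x::real^2) \<bullet> y = x$1 * y$1 + x$2 * y$2"
  by (simp add: inner_vec_def sum_2)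

lemma vec2_eq: "(x::'a^2) = y \<longleftrightarrow> x$1 = y$1 \<and> x$2 = y$2"
  by (simp add: vec_eq_iff forall_2)

lemma mat2_eq: "(A::'a^2^2) = B \<longleftrightarrow> A$1$1 = B$1$1 \<and> A$1$2 = B$1$2 \<and> A$2$1 = B$2$1 \<and> A$2$2 = B$2$2"
  by (simp add: vec_eq_iff forall_2)

lemma mat2_nth[simp]: "mat2 a b c d $1$1 = a" "mat2 a b c d $1$2 = b" "mat2 a b c d $2$1 = c" "mat2 a b c d $2$2 = d"
  by (simp_all add: mat2_def)

lemma mm2: "((A::'a::comm_semiring_1^2^'n) ** (B::'a^'m^2))$i$j = A$i$1 * B$1$j + A$i$2 * B$2$j"
  by (simp add: matrix_matrix_mult_def sum_2)

lemma mat1_2[simp]: "(mat 1::real^2^2)$1$1 = 1" "(mat 1::real^2^2)$1$2 = 0" "(mat 1::real^2^2)$2$1 = 0" "(mat 1::real^2^2)$2$2 = 1"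
  by (simp_all add: mat_def)

lemma sub_mat: "(A - l *\<^sub>R mat 1 :: real^2^2)$1$1 = A$1$1 - l" "(A - l *\<^sub>R mat 1 :: real^2^2)$1$2 = A$1$2"
   "(A - l *\<^sub>R mat 1 :: real^2^2)$2$1 = A$2$1" "(A - l *\<^sub>R mat 1 :: real^2^2)$2$2 = A$2$2 - l"
  by (simp_all add: mat_def)

lemma pe_alt: "pe p r s q l \<longleftrightarrow> (\<exists>x1 x2. 0 \<le> x1 \<and> 0 \<le> x2 \<and> (x1 \<noteq> 0 \<or> x2 \<noteq> 0) \<and>
      0 \<le> (p - l) * x1 + r * x2 \<and> 0 \<le> s * x1 + (q - l) * x2 \<and>
      x1 * ((p - l) * x1 + r * x2) + x2 * (s * x1 + (q - l) * x2) = 0)"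
proof
  assume "pe p r s q l"
  then consider "0 \<le> s" "l = p" | "0 \<le> r" "l = q" | t where "t > 0" "(p - l) * t + r = 0" "s * t + (q - l) = 0"
    unfolding pe_def by blast
  then show "\<exists>x1 x2. 0 \<le> x1 \<and> 0 \<le> x2 \<and> (x1 \<noteq> 0 \<or> x2 \<noteq> 0) \<and>
      0 \<le> (p - l) * x1 + r * x2 \<and> 0 \<le> s * x1 + (q - l) * x2 \<and>
      x1 * ((p - l) * x1 + r * x2) + x2 * (s * x1 + (q - l) * x2) = 0"
  proof cases
    case 1 then show ?thesis by (intro exI[of _ 1] exI[of _ 0]) simp
  next
    case 2 then show ?thesis by (intro exI[of _ 0] exI[of _ 1]) simp
  next
    case 3 then show ?thesis by (intro exI[of _ t] exI[of _ 1]) simp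
  qed
next
  assume "\<exists>x1 x2. 0 \<le> x1 \<and> 0 \<le> x2 \<and> (x1 \<noteq> 0 \<or> x2 \<noteq> 0) \<and>
      0 \<le> (p - l) * x1 + r * x2 \<and> 0 \<le> s * x1 + (q - l) * x2 \<and>
      x1 * ((p - l) * x1 + r * x2) + x2 * (s * x1 + (q - l) * x2) = 0"
  then obtain x1 x2 where h: "0 \<le> x1" "0 \<le> x2" "x1 \<noteq> 0 \<or> x2 \<noteq> 0"
      "0 \<le> (p - l) * x1 + r * x2" "0 \<le> s * x1 + (q - l) * x2"
      "x1 * ((p - l) * x1 + r * x2) + x2 * (s * x1 + (q - l) * x2) = 0" by blast
  have a: "0 \<le> x1 * ((p - l) * x1 + r * x2)" using h by simp
  have b: "0 \<le> x2 * (s * x1 + (q - l) * x2)" using h by simp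
  have e1: "x1 * ((p - l) * x1 + r * x2) = 0" and e2: "x2 * (s * x1 + (q - l) * x2) = 0"
    using a b h(6) by linarith+
  show "pe p r s q l"
  proof (cases "x2 = 0")
    case True
    then have "x1 > 0" using h by auto
    then show ?thesis using e1 h(5) True unfolding pe_def by (auto simp: zero_le_mult_iff)
  next
    case False
    then have x2: "x2 > 0" using h by auto
    show ?thesis
    proof (cases "x1 = 0")
      case True
      then show ?thesis using e2 h(4) x2 unfolding pe_def by (auto simp: zero_le_mult_iff)
    next
      case False
      then have x1: "x1 > 0" using h by auto
      have w1: "(p - l) * x1 + r * x2 = 0" using e1 x1 by simp
      have w2: "s * x1 + (q - l) * x2 = 0" using e2 x2 by simp
      have "(p - l) * (x1/x2) + r = 0" using w1 x2 by (simp add: field_simps)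
      moreover have "s * (x1/x2) + (q - l) = 0" using w2 x2 by (simp add: field_simps)
      moreover have "x1/x2 > 0" using x1 x2 by simp
      ultimately show ?thesis unfolding pe_def by blast
    qed
  qed
qed

lemma Leig_pe: "L_eigenvalue A l \<longleftrightarrow> pe (bp A) (br A) (bs A) (bq A) l"
proof -
  let ?p = "bp A" and ?r = "br A" and ?s = "bs A" and ?q = "bq A"
  have key: "L_eigenvalue A l \<longleftrightarrow> (\<exists>x1 x2. 0 \<le> x1 \<and> 0 \<le> x2 \<and> (x1 \<noteq> 0 \<or> x2 \<noteq> 0) \<and>
      0 \<le> (?p - l) * x1 + ?r * x2 \<and> 0 \<le> ?s * x1 + (?q - l) * x2 \<and>
      x1 * ((?p - l) * x1 + ?r * x2) + x2 * (?s * x1 + (?q - l) * x2) = 0)"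
  proof
    assume "L_eigenvalue A l"
    then obtain x :: "real^2" where x: "x \<noteq> 0" "x \<in> lorentz_cone" "(A - l *\<^sub>R mat 1) *v x \<in> lorentz_cone"
       "x \<bullet> ((A - l *\<^sub>R mat 1) *v x) = 0" unfolding L_eigenvalue_def by blast
    define x1 where "x1 = (x$1 + x$2)/2"
    define x2 where "x2 = (x$2 - x$1)/2"
    have h1: "\<bar>x$1\<bar> \<le> x$2" using x(2) by (simp add: lorentz_cone_def)
    have h2: "\<bar>A$1$1*x$1 - l*x$1 + A$1$2*x$2\<bar> \<le> A$2$1*x$1 + A$2$2*x$2 - l * x$2"
      using x(3) by (simp add: lorentz_cone_def mv2 sub_mat algebra_simps)
    have h3: "x$1 * (A$1$1*x$1 - l*x$1 + A$1$2*x$2) + x$2 * (A$2$1*x$1 + A$2$2*x$2 - l * x$2) = 0"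
      using x(4) by (simp add: inner2 mv2 sub_mat algebra_simps)
    have h4: "x$1 \<noteq> 0 \<or> x$2 \<noteq> 0" using x(1) by (simp add: vec2_eq)
    show "\<exists>x1 x2. 0 \<le> x1 \<and> 0 \<le> x2 \<and> (x1 \<noteq> 0 \<or> x2 \<noteq> 0) \<and>
      0 \<le> (?p - l) * x1 + ?r * x2 \<and> 0 \<le> ?s * x1 + (?q - l) * x2 \<and>
      x1 * ((?p - l) * x1 + ?r * x2) + x2 * (?s * x1 + (?q - l) * x2) = 0"
      apply (rule exI[of _ x1], rule exI[of _ x2])
      using h1 h2 h3 h4 unfolding x1_def x2_def bp_def br_def bs_def bq_def
      by (auto simp: algebra_simps abs_le_iff field_simps)
  next
    assume "\<exists>x1 x2. 0 \<le> x1 \<and> 0 \<le> x2 \<and> (x1 \<noteq> 0 \<or> x2 \<noteq> 0) \<and>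
      0 \<le> (?p - l) * x1 + ?r * x2 \<and> 0 \<le> ?s * x1 + (?q - l) * x2 \<and>
      x1 * ((?p - l) * x1 + ?r * x2) + x2 * (?s * x1 + (?q - l) * x2) = 0"
    then obtain x1 x2 where h: "0 \<le> x1" "0 \<le> x2" "x1 \<noteq> 0 \<or> x2 \<noteq> 0"
      "0 \<le> (?p - l) * x1 + ?r * x2" "0 \<le> ?s * x1 + (?q - l) * x2"
      "x1 * ((?p - l) * x1 + ?r * x2) + x2 * (?s * x1 + (?q - l) * x2) = 0" by blast
    define x :: "real^2" where "x = vector [x1 - x2, x1 + x2]"
    have "x \<noteq> 0" using h(1-3) by (auto simp: x_def vec2_eq)
    moreover have "x \<in> lorentz_cone" using h(1,2) by (simp add: x_def lorentz_cone_def)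
    moreover have "(A - l *\<^sub>R mat 1) *v x \<in> lorentz_cone"
      using h(4,5) unfolding lorentz_cone_def bp_def br_def bs_def bq_def
      by (simp add: x_def mv2 sub_mat abs_le_iff field_simps)
    moreover have "x \<bullet> ((A - l *\<^sub>R mat 1) *v x) = 2 * (x1 * ((?p - l) * x1 + ?r * x2) + x2 * (?s * x1 + (?q - l) * x2))"
      unfolding bp_def br_def bs_def bq_def
      by (simp add: x_def mv2 sub_mat inner2 field_simps)
    then have "x \<bullet> ((A - l *\<^sub>R mat 1) *v x) = 0" using h(6) by simp
    ultimately show "L_eigenvalue A l" unfolding L_eigenvalue_def by blast
  qed
  show ?thesis unfolding key pe_alt ..
qed


definition fromB :: "real \<Rightarrow> real \<Rightarrow> real \<Rightarrow> real \<Rightarrow> real^2^2" where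
  "fromB p r s q = mat2 ((p - s - r + q)/2) ((p - s + r - q)/2) ((p + s - r - q)/2) ((p + s + r + q)/2)"

lemma fromB_coords[simp]: "bp (fromB p r s q) = p" "br (fromB p r s q) = r" "bs (fromB p r s q) = s" "bq (fromB p r s q) = q"
  by (simp_all add: fromB_def bp_def br_def bs_def bq_def field_simps)

lemma coords_fromB: "fromB (bp A) (br A) (bs A) (bq A) = A"
  by (simp add: fromB_def bp_def br_def bs_def bq_def mat2_eq field_simps)

lemma coord_eq: "bp A = bp B \<Longrightarrow> br A = br B \<Longrightarrow> bs A = bs B \<Longrightarrow> bq A = bq B \<Longrightarrow> A = B"
  by (metis coords_fromB)

lemma coords_add[simp]: "bp (A + B) = bp A + bp B" "br (A + B) = br A + br B" "bs (A + B) = bs A + bs B" "bq (A + B) = bq A + bq B"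
  by (simp_all add: bp_def br_def bs_def bq_def field_simps)

lemma coords_scale[simp]: "bp (c *\<^sub>R A) = c * bp A" "br (c *\<^sub>R A) = c * br A" "bs (c *\<^sub>R A) = c * bs A" "bq (c *\<^sub>R A) = c * bq A"
  by (simp_all add: bp_def br_def bs_def bq_def field_simps)

lemma Lspec: "L_spectrum A = {l. pe (bp A) (br A) (bs A) (bq A) l}"
  by (simp add: L_spectrum_def Leig_pe)

lemma sym2: "A \<in> sym_mats \<longleftrightarrow> A$1$2 = A$2$1"
  by (auto simp: sym_mats_def transpose_def vec_eq_iff forall_2)

lemma sym_bs: "A \<in> sym_mats \<Longrightarrow> bs A = br A"
  by (simp add: sym2 bs_def br_def)

lemma inv_unique:
  fixes M N :: "real^2^2"
  assumes "M ** N = mat 1" "N ** M = mat 1"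
  shows "matrix_inv M = N"
proof -
  have ex: "\<exists>N'. M ** N' = mat 1 \<and> N' ** M = mat 1" using assms by blast
  define N' where "N' = matrix_inv M"
  have h: "M ** N' = mat 1 \<and> N' ** M = mat 1" unfolding N'_def matrix_inv_def using someI_ex[OF ex] .
  have "N' = N' ** (M ** N)" using assms(1) by (simp add: matrix_mul_rid)
  also have "\<dots> = (N' ** M) ** N" by (simp add: matrix_mul_assoc)
  also have "\<dots> = N" using h by (simp add: matrix_mul_lid)
  finally show ?thesis unfolding N'_def .
qed

lemma invP:
  assumes "\<alpha>\<^sup>2 - \<beta>\<^sup>2 = (1::real)"
  shows "matrix_inv (mat2 \<alpha> \<beta> \<beta> \<alpha>) = mat2 \<alpha> (-\<beta>) (-\<beta>) \<alpha>"
proof -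
  have h: "\<alpha> * \<alpha> - \<beta> * \<beta> = 1" using assms by (simp add: power2_eq_square)
  show ?thesis by (rule inv_unique) (use h in \<open>simp_all add: mat2_eq mm2 algebra_simps\<close>)
qed

lemma invQ:
  assumes "\<alpha>\<^sup>2 - \<beta>\<^sup>2 = (1::real)"
  shows "matrix_inv (mat2 (-\<alpha>) (-\<beta>) \<beta> \<alpha>) = mat2 (-\<alpha>) (-\<beta>) \<beta> \<alpha>"
proof -
  have h: "\<alpha> * \<alpha> - \<beta> * \<beta> = 1" using assms by (simp add: power2_eq_square)
  show ?thesis by (rule inv_unique) (use h in \<open>simp_all add: mat2_eq mm2 algebra_simps\<close>)
qed

lemma coordsP_raw:
  fixes A :: "real^2^2" and \<alpha> \<beta> :: real
  defines "C \<equiv> mat2 \<alpha> \<beta> \<beta> \<alpha> ** A ** mat2 \<alpha> (-\<beta>) (-\<beta>) \<alpha>"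
  shows "bp C = (\<alpha> + \<beta>) * (\<alpha> - \<beta>) * bp A" "br C = (\<alpha> + \<beta>) * (\<alpha> + \<beta>) * br A"
        "bs C = (\<alpha> - \<beta>) * (\<alpha> - \<beta>) * bs A" "bq C = (\<alpha> + \<beta>) * (\<alpha> - \<beta>) * bq A"
  unfolding C_def by (simp_all add: mm2 bp_def br_def bs_def bq_def field_simps; simp add: algebra_simps)+

lemma coordsQ_raw:
  fixes A :: "real^2^2" and \<alpha> \<beta> :: real
  defines "C \<equiv> mat2 (-\<alpha>) (-\<beta>) \<beta> \<alpha> ** A ** mat2 (-\<alpha>) (-\<beta>) \<beta> \<alpha>"
  shows "bp C = (\<alpha> + \<beta>) * (\<alpha> - \<beta>) * bq A" "br C = (\<alpha> - \<beta>) * (\<alpha> - \<beta>) * bs A"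
        "bs C = (\<alpha> + \<beta>) * (\<alpha> + \<beta>) * br A" "bq C = (\<alpha> + \<beta>) * (\<alpha> - \<beta>) * bp A"
  unfolding C_def by (simp_all add: mm2 bp_def br_def bs_def bq_def field_simps; simp add: algebra_simps)+


lemma conj_aux:
  assumes h: "\<alpha>\<^sup>2 - \<beta>\<^sup>2 = (1::real)"
  shows "(\<alpha> + \<beta>) * (\<alpha> - \<beta>) = 1" "(\<alpha> + \<beta>) * (\<alpha> + \<beta>) > 0"
        "(\<alpha> - \<beta>) * (\<alpha> - \<beta>) = 1 / ((\<alpha> + \<beta>) * (\<alpha> + \<beta>))"
proof -
  show d: "(\<alpha> + \<beta>) * (\<alpha> - \<beta>) = 1" using h by (simp add: power2_eq_square algebra_simps)
  then have nz: "\<alpha> + \<beta> \<noteq> 0" by auto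
  then show "(\<alpha> + \<beta>) * (\<alpha> + \<beta>) > 0" using not_real_square_gt_zero by blast
  have "\<alpha> - \<beta> = 1 / (\<alpha> + \<beta>)" using d nz by (simp add: field_simps)
  then show "(\<alpha> - \<beta>) * (\<alpha> - \<beta>) = 1 / ((\<alpha> + \<beta>) * (\<alpha> + \<beta>))" by simp
qed

lemma coordsP:
  fixes A :: "real^2^2"
  assumes h: "\<alpha>\<^sup>2 - \<beta>\<^sup>2 = (1::real)"
  defines "C \<equiv> mat2 \<alpha> \<beta> \<beta> \<alpha> ** A ** matrix_inv (mat2 \<alpha> \<beta> \<beta> \<alpha>)"
  shows "bp C = bp A" "br C = (\<alpha> + \<beta>) * (\<alpha> + \<beta>) * br A"
        "bs C = bs A / ((\<alpha> + \<beta>) * (\<alpha> + \<beta>))" "bq C = bq A"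
  unfolding C_def invP[OF h] coordsP_raw conj_aux[OF h] by simp_all

lemma coordsQ:
  fixes A :: "real^2^2"
  assumes h: "\<alpha>\<^sup>2 - \<beta>\<^sup>2 = (1::real)"
  defines "C \<equiv> mat2 (-\<alpha>) (-\<beta>) \<beta> \<alpha> ** A ** matrix_inv (mat2 (-\<alpha>) (-\<beta>) \<beta> \<alpha>)"
  shows "bp C = bq A" "br C = bs A / ((\<alpha> + \<beta>) * (\<alpha> + \<beta>))"
        "bs C = (\<alpha> + \<beta>) * (\<alpha> + \<beta>) * br A" "bq C = bp A"
  unfolding C_def invQ[OF h] coordsQ_raw conj_aux[OF h] by simp_all

lemma specP:
  assumes h: "\<alpha>\<^sup>2 - \<beta>\<^sup>2 = (1::real)"
  shows "L_spectrum (mat2 \<alpha> \<beta> \<beta> \<alpha> ** A ** matrix_inv (mat2 \<alpha> \<beta> \<beta> \<alpha>)) = L_spectrum A"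
  unfolding Lspec coordsP[OF h] apply (rule set_eqI) using pe_scale[OF conj_aux(2)[OF h]] by simp

lemma specQ:
  assumes h: "\<alpha>\<^sup>2 - \<beta>\<^sup>2 = (1::real)"
  shows "L_spectrum (mat2 (-\<alpha>) (-\<beta>) \<beta> \<alpha> ** A ** matrix_inv (mat2 (-\<alpha>) (-\<beta>) \<beta> \<alpha>)) = L_spectrum A"
  unfolding Lspec coordsQ[OF h] apply (rule set_eqI)
  using pe_scale[OF conj_aux(2)[OF h], of "bp A" "br A" "bs A" "bq A"]
    pe_swap[of "bq A" "bs A / ((\<alpha> + \<beta>) * (\<alpha> + \<beta>))" "(\<alpha> + \<beta>) * (\<alpha> + \<beta>) * br A" "bp A"]
  by simp

lemma alpha_beta:
  assumes "k > (0::real)"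
  shows "\<exists>\<alpha> \<beta>. \<alpha>\<^sup>2 - \<beta>\<^sup>2 = 1 \<and> (\<alpha> + \<beta>) * (\<alpha> + \<beta>) = k"
proof -
  define m where "m = sqrt k"
  have m: "m > 0" "m * m = k" using assms by (simp_all add: m_def)
  define \<alpha> where "\<alpha> = (m + 1/m)/2"
  define \<beta> where "\<beta> = (m - 1/m)/2"
  have "\<alpha> + \<beta> = m" "\<alpha> - \<beta> = 1/m" by (simp_all add: \<alpha>_def \<beta>_def field_simps)
  moreover have "\<alpha>\<^sup>2 - \<beta>\<^sup>2 = (\<alpha> + \<beta>) * (\<alpha> - \<beta>)" by (simp add: power2_eq_square algebra_simps)
  ultimately have "\<alpha>\<^sup>2 - \<beta>\<^sup>2 = 1 \<and> (\<alpha> + \<beta>) * (\<alpha> + \<beta>) = k"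
    using m by simp
  then show ?thesis by blast
qed


lemma main_M:
  fixes \<phi> :: "real^2^2 \<Rightarrow> real^2^2"
  assumes add: "\<And>A B. \<phi> (A + B) = \<phi> A + \<phi> B" and scal: "\<And>c A. \<phi> (c *\<^sub>R A) = c *\<^sub>R \<phi> A"
    and pres: "\<forall>A. L_spectrum (\<phi> A) = L_spectrum A"
  shows "\<exists>\<alpha> \<beta>::real. \<alpha>\<^sup>2 - \<beta>\<^sup>2 = 1 \<and>
       ((\<forall>A. \<phi> A = mat2 \<alpha> \<beta> \<beta> \<alpha> ** A ** matrix_inv (mat2 \<alpha> \<beta> \<beta> \<alpha>)) \<or>
        (\<forall>A. \<phi> A = mat2 (-\<alpha>) (-\<beta>) \<beta> \<alpha> ** A ** matrix_inv (mat2 (-\<alpha>) (-\<beta>) \<beta> \<alpha>)))"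
proof -
  define F1 where "F1 = \<phi> (fromB 1 0 0 0)"
  define F2 where "F2 = \<phi> (fromB 0 1 0 0)"
  define F3 where "F3 = \<phi> (fromB 0 0 1 0)"
  define F4 where "F4 = \<phi> (fromB 0 0 0 1)"
  have dec: "\<phi> A = bp A *\<^sub>R F1 + br A *\<^sub>R F2 + bs A *\<^sub>R F3 + bq A *\<^sub>R F4" for A
  proof -
    have "A = bp A *\<^sub>R fromB 1 0 0 0 + br A *\<^sub>R fromB 0 1 0 0 + bs A *\<^sub>R fromB 0 0 1 0 + bq A *\<^sub>R fromB 0 0 0 1"
      by (rule coord_eq) simp_all
    then have "\<phi> A = \<phi> (bp A *\<^sub>R fromB 1 0 0 0 + br A *\<^sub>R fromB 0 1 0 0 + bs A *\<^sub>R fromB 0 0 1 0 + bq A *\<^sub>R fromB 0 0 0 1)"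
      by simp
    then show ?thesis by (simp add: add scal F1_def F2_def F3_def F4_def)
  qed
  have co: "bp (\<phi> A) = bp A * bp F1 + br A * bp F2 + bs A * bp F3 + bq A * bp F4"
           "br (\<phi> A) = bp A * br F1 + br A * br F2 + bs A * br F3 + bq A * br F4"
           "bs (\<phi> A) = bp A * bs F1 + br A * bs F2 + bs A * bs F3 + bq A * bs F4"
           "bq (\<phi> A) = bp A * bq F1 + br A * bq F2 + bs A * bq F3 + bq A * bq F4" for A
    by (simp_all add: dec)
  have H: "pe p r s q l \<longleftrightarrow> pe (p * bp F1 + r * bp F2 + s * bp F3 + q * bp F4)
     (p * br F1 + r * br F2 + s * br F3 + q * br F4) (p * bs F1 + r * bs F2 + s * bs F3 + q * bs F4)
     (p * bq F1 + r * bq F2 + s * bq F3 + q * bq F4) l" for p r s q l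
  proof -
    have "L_spectrum (\<phi> (fromB p r s q)) = L_spectrum (fromB p r s q)" using pres by blast
    then have "l \<in> L_spectrum (\<phi> (fromB p r s q)) \<longleftrightarrow> l \<in> L_spectrum (fromB p r s q)" by simp
    then show ?thesis unfolding Lspec co by simp
  qed
  from core_M[OF H] show ?thesis
  proof
    assume c: "bp F1 = 1 \<and> br F1 = 0 \<and> bs F1 = 0 \<and> bq F1 = 0 \<and> bp F2 = 0 \<and> br F2 > 0 \<and> bs F2 = 0 \<and> bq F2 = 0 \<and>
         bp F3 = 0 \<and> br F3 = 0 \<and> br F2 * bs F3 = 1 \<and> bq F3 = 0 \<and> bp F4 = 0 \<and> br F4 = 0 \<and> bs F4 = 0 \<and> bq F4 = 1"
    then obtain \<alpha> \<beta> where ab: "\<alpha>\<^sup>2 - \<beta>\<^sup>2 = (1::real)" "(\<alpha> + \<beta>) * (\<alpha> + \<beta>) = br F2"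
      using alpha_beta by blast
    have k: "bs F3 = 1 / br F2" using c by (simp add: field_simps)
    have "\<forall>A. \<phi> A = mat2 \<alpha> \<beta> \<beta> \<alpha> ** A ** matrix_inv (mat2 \<alpha> \<beta> \<beta> \<alpha>)"
    proof
      fix A
      show "\<phi> A = mat2 \<alpha> \<beta> \<beta> \<alpha> ** A ** matrix_inv (mat2 \<alpha> \<beta> \<beta> \<alpha>)"
        by (rule coord_eq) (use c k in \<open>simp_all add: co coordsP[OF ab(1)] ab(2)\<close>)
    qed
    then show ?thesis using ab by blast
  next
    assume c: "bp F1 = 0 \<and> br F1 = 0 \<and> bs F1 = 0 \<and> bq F1 = 1 \<and> bp F2 = 0 \<and> br F2 = 0 \<and> bs F2 > 0 \<and> bq F2 = 0 \<and>
         bp F3 = 0 \<and> br F3 * bs F2 = 1 \<and> bs F3 = 0 \<and> bq F3 = 0 \<and> bp F4 = 1 \<and> br F4 = 0 \<and> bs F4 = 0 \<and> bq F4 = 0"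
    then obtain \<alpha> \<beta> where ab: "\<alpha>\<^sup>2 - \<beta>\<^sup>2 = (1::real)" "(\<alpha> + \<beta>) * (\<alpha> + \<beta>) = bs F2"
      using alpha_beta by blast
    have k: "br F3 = 1 / bs F2" using c by (simp add: field_simps)
    have "\<forall>A. \<phi> A = mat2 (-\<alpha>) (-\<beta>) \<beta> \<alpha> ** A ** matrix_inv (mat2 (-\<alpha>) (-\<beta>) \<beta> \<alpha>)"
    proof
      fix A
      show "\<phi> A = mat2 (-\<alpha>) (-\<beta>) \<beta> \<alpha> ** A ** matrix_inv (mat2 (-\<alpha>) (-\<beta>) \<beta> \<alpha>)"
        by (rule coord_eq) (use c k in \<open>simp_all add: co coordsQ[OF ab(1)] ab(2) mult.commute\<close>)
    qed
    then show ?thesis using ab by blast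
  qed
qed

lemma sym_add: "A \<in> sym_mats \<Longrightarrow> B \<in> sym_mats \<Longrightarrow> A + B \<in> sym_mats"
  by (simp add: sym2)

lemma sym_scale: "A \<in> sym_mats \<Longrightarrow> c *\<^sub>R A \<in> sym_mats"
  by (simp add: sym2)

lemma sym_fromB: "fromB p h h q \<in> sym_mats"
  by (simp add: sym2 fromB_def)

lemma main_S:
  fixes \<phi> :: "real^2^2 \<Rightarrow> real^2^2"
  assumes maps: "\<forall>A\<in>sym_mats. \<phi> A \<in> sym_mats"
    and lin: "\<forall>A\<in>sym_mats. \<forall>B\<in>sym_mats. \<forall>c::real.
                \<phi> (A + B) = \<phi> A + \<phi> B \<and> \<phi> (c *\<^sub>R A) = c *\<^sub>R \<phi> A"
    and pres: "\<forall>A\<in>sym_mats. L_spectrum (\<phi> A) = L_spectrum A"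
  shows "\<exists>\<alpha> \<beta>::real. \<alpha>\<^sup>2 - \<beta>\<^sup>2 = 1 \<and> \<beta> = 0 \<and>
       ((\<forall>A\<in>sym_mats. \<phi> A = mat2 \<alpha> \<beta> \<beta> \<alpha> ** A ** matrix_inv (mat2 \<alpha> \<beta> \<beta> \<alpha>)) \<or>
        (\<forall>A\<in>sym_mats. \<phi> A = mat2 (-\<alpha>) (-\<beta>) \<beta> \<alpha> ** A ** matrix_inv (mat2 (-\<alpha>) (-\<beta>) \<beta> \<alpha>)))"
proof -
  define E1 where "E1 = fromB 1 0 0 0"
  define ES where "ES = fromB 0 1 1 0"
  define E4 where "E4 = fromB 0 0 0 1"
  have sE: "E1 \<in> sym_mats" "ES \<in> sym_mats" "E4 \<in> sym_mats" unfolding E1_def ES_def E4_def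
    using sym_fromB by auto
  define F1 where "F1 = \<phi> E1"
  define F2 where "F2 = \<phi> ES"
  define F4 where "F4 = \<phi> E4"
  have dec: "\<phi> A = bp A *\<^sub>R F1 + br A *\<^sub>R F2 + bq A *\<^sub>R F4" if A: "A \<in> sym_mats" for A
  proof -
    have "A = bp A *\<^sub>R E1 + br A *\<^sub>R ES + bq A *\<^sub>R E4"
      by (rule coord_eq) (simp_all add: E1_def ES_def E4_def sym_bs[OF A])
    then have "\<phi> A = \<phi> (bp A *\<^sub>R E1 + br A *\<^sub>R ES + bq A *\<^sub>R E4)" by simp
    also have "\<dots> = \<phi> (bp A *\<^sub>R E1 + br A *\<^sub>R ES) + \<phi> (bq A *\<^sub>R E4)"
      using lin sE sym_add sym_scale by blast
    also have "\<phi> (bp A *\<^sub>R E1 + br A *\<^sub>R ES) = \<phi> (bp A *\<^sub>R E1) + \<phi> (br A *\<^sub>R ES)"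
      using lin sE sym_scale by blast
    finally show ?thesis using lin sE by (simp add: F1_def F2_def F4_def)
  qed
  have co: "bp (\<phi> A) = bp A * bp F1 + br A * bp F2 + bq A * bp F4"
           "br (\<phi> A) = bp A * br F1 + br A * br F2 + bq A * br F4"
           "bs (\<phi> A) = bp A * br F1 + br A * br F2 + bq A * br F4"
           "bq (\<phi> A) = bp A * bq F1 + br A * bq F2 + bq A * bq F4" if A: "A \<in> sym_mats" for A
  proof -
    show "bp (\<phi> A) = bp A * bp F1 + br A * bp F2 + bq A * bp F4"
         "br (\<phi> A) = bp A * br F1 + br A * br F2 + bq A * br F4"
         "bq (\<phi> A) = bp A * bq F1 + br A * bq F2 + bq A * bq F4" by (simp_all add: dec[OF A])
    have "bs (\<phi> A) = br (\<phi> A)" using maps A sym_bs by blast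
    then show "bs (\<phi> A) = bp A * br F1 + br A * br F2 + bq A * br F4" by (simp add: dec[OF A])
  qed
  have H: "pe p h h q l \<longleftrightarrow> pe (p * bp F1 + h * bp F2 + q * bp F4)
     (p * br F1 + h * br F2 + q * br F4) (p * br F1 + h * br F2 + q * br F4)
     (p * bq F1 + h * bq F2 + q * bq F4) l" for p h q l
  proof -
    have "L_spectrum (\<phi> (fromB p h h q)) = L_spectrum (fromB p h h q)" using pres sym_fromB by blast
    then have "l \<in> L_spectrum (\<phi> (fromB p h h q)) \<longleftrightarrow> l \<in> L_spectrum (fromB p h h q)" by simp
    then show ?thesis unfolding Lspec co[OF sym_fromB] by simp
  qed
  have ab: "(1::real)\<^sup>2 - 0\<^sup>2 = 1" by simp
  from core_S[OF H] have c0: "bp F2 = 0 \<and> br F2 = 1 \<and> bq F2 = 0 \<and> br F1 = 0 \<and> br F4 = 0"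
    and cc: "(bp F1 = 1 \<and> bq F1 = 0 \<and> bp F4 = 0 \<and> bq F4 = 1) \<or> (bp F1 = 0 \<and> bq F1 = 1 \<and> bp F4 = 1 \<and> bq F4 = 0)"
    by blast+
  from cc show ?thesis
  proof
    assume c: "bp F1 = 1 \<and> bq F1 = 0 \<and> bp F4 = 0 \<and> bq F4 = 1"
    have "\<forall>A\<in>sym_mats. \<phi> A = mat2 1 0 0 1 ** A ** matrix_inv (mat2 1 0 0 1)"
    proof
      fix A :: "real^2^2" assume A: "A \<in> sym_mats"
      show "\<phi> A = mat2 1 0 0 1 ** A ** matrix_inv (mat2 1 0 0 1)"
        using coordsP[OF ab, of A] c c0 co[OF A] sym_bs[OF A] by (intro coord_eq) simp_all
    qed
    then show ?thesis using ab by blast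
  next
    assume c: "bp F1 = 0 \<and> bq F1 = 1 \<and> bp F4 = 1 \<and> bq F4 = 0"
    have "\<forall>A\<in>sym_mats. \<phi> A = mat2 (-1) (-0) 0 1 ** A ** matrix_inv (mat2 (-1) (-0) 0 1)"
    proof
      fix A :: "real^2^2" assume A: "A \<in> sym_mats"
      show "\<phi> A = mat2 (-1) (-0) 0 1 ** A ** matrix_inv (mat2 (-1) (-0) 0 1)"
        using coordsQ[OF ab, of A] c c0 co[OF A] sym_bs[OF A] by (intro coord_eq) simp_all
    qed
    then show ?thesis using ab by blast
  qed
qed


theorem theorem1p1:
  fixes W :: "(real^2^2) set" and \<phi> :: "real^2^2 \<Rightarrow> real^2^2"
  assumes W: "W = UNIV \<or> W = sym_mats"
    and maps: "\<forall>A\<in>W. \<phi> A \<in> W"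
    and lin: "\<forall>A\<in>W. \<forall>B\<in>W. \<forall>c::real.
                \<phi> (A + B) = \<phi> A + \<phi> B \<and> \<phi> (c *\<^sub>R A) = c *\<^sub>R \<phi> A"
  shows "(\<forall>A\<in>W. L_spectrum (\<phi> A) = L_spectrum A) \<longleftrightarrow>
    (\<exists>\<alpha> \<beta>::real. \<alpha>\<^sup>2 - \<beta>\<^sup>2 = 1 \<and> (W = sym_mats \<longrightarrow> \<beta> = 0) \<and>
       ((\<forall>A\<in>W. \<phi> A = mat2 \<alpha> \<beta> \<beta> \<alpha> ** A ** matrix_inv (mat2 \<alpha> \<beta> \<beta> \<alpha>)) \<or>
        (\<forall>A\<in>W. \<phi> A = mat2 (-\<alpha>) (-\<beta>) \<beta> \<alpha> ** A ** matrix_inv (mat2 (-\<alpha>) (-\<beta>) \<beta> \<alpha>))))"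
proof
  assume pres: "\<forall>A\<in>W. L_spectrum (\<phi> A) = L_spectrum A"
  from W show "\<exists>\<alpha> \<beta>::real. \<alpha>\<^sup>2 - \<beta>\<^sup>2 = 1 \<and> (W = sym_mats \<longrightarrow> \<beta> = 0) \<and>
       ((\<forall>A\<in>W. \<phi> A = mat2 \<alpha> \<beta> \<beta> \<alpha> ** A ** matrix_inv (mat2 \<alpha> \<beta> \<beta> \<alpha>)) \<or>
        (\<forall>A\<in>W. \<phi> A = mat2 (-\<alpha>) (-\<beta>) \<beta> \<alpha> ** A ** matrix_inv (mat2 (-\<alpha>) (-\<beta>) \<beta> \<alpha>)))"
  proof
    assume WU: "W = UNIV"
    have ns: "UNIV \<noteq> sym_mats"
    proof
      assume "UNIV = sym_mats"
      then have "mat2 0 1 0 0 \<in> sym_mats" by blast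
      then show False by (simp add: sym2)
    qed
    have add: "\<phi> (A + B) = \<phi> A + \<phi> B" and scal: "\<phi> (c *\<^sub>R A) = c *\<^sub>R \<phi> A" for A B and c :: real
      using lin WU by auto
    from main_M[of \<phi>, OF add scal] pres WU ns show ?thesis by auto
  next
    assume WS: "W = sym_mats"
    from main_S[of \<phi>] maps lin pres WS show ?thesis by auto
  qed
next
  assume "\<exists>\<alpha> \<beta>::real. \<alpha>\<^sup>2 - \<beta>\<^sup>2 = 1 \<and> (W = sym_mats \<longrightarrow> \<beta> = 0) \<and>
       ((\<forall>A\<in>W. \<phi> A = mat2 \<alpha> \<beta> \<beta> \<alpha> ** A ** matrix_inv (mat2 \<alpha> \<beta> \<beta> \<alpha>)) \<or>
        (\<forall>A\<in>W. \<phi> A = mat2 (-\<alpha>) (-\<beta>) \<beta> \<alpha> ** A ** matrix_inv (mat2 (-\<alpha>) (-\<beta>) \<beta> \<alpha>)))"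
  then obtain \<alpha> \<beta> :: real where ab: "\<alpha>\<^sup>2 - \<beta>\<^sup>2 = 1" and
    c: "(\<forall>A\<in>W. \<phi> A = mat2 \<alpha> \<beta> \<beta> \<alpha> ** A ** matrix_inv (mat2 \<alpha> \<beta> \<beta> \<alpha>)) \<or>
        (\<forall>A\<in>W. \<phi> A = mat2 (-\<alpha>) (-\<beta>) \<beta> \<alpha> ** A ** matrix_inv (mat2 (-\<alpha>) (-\<beta>) \<beta> \<alpha>))" by blast
  from c show "\<forall>A\<in>W. L_spectrum (\<phi> A) = L_spectrum A"
  proof
    assume "\<forall>A\<in>W. \<phi> A = mat2 \<alpha> \<beta> \<beta> \<alpha> ** A ** matrix_inv (mat2 \<alpha> \<beta> \<beta> \<alpha>)"
    then show ?thesis using specP[OF ab] by simp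
  next
    assume "\<forall>A\<in>W. \<phi> A = mat2 (-\<alpha>) (-\<beta>) \<beta> \<alpha> ** A ** matrix_inv (mat2 (-\<alpha>) (-\<beta>) \<beta> \<alpha>)"
    then show ?thesis using specQ[OF ab] by simp
  qed
qed

end
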